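(* There exist instances of the multi-agent contract model (described in the context) with subadditive reward functions and $n$ agents whose price of equality is $\Omega(\sqrt{n})$.
   Context: Model: principal and agents $A=[n]$; each agent $i$ has a finite action set $T_i$ (pairwise disjoint), $T=\bigsqcup_iT_i$, costs $c_j\ge0$, $c(S_i)=\sum_{j\in S_i}c_j$. Reward $f:2^T\to[0,1]$ monotone, $f(\emptyset)=0$; $f$ is subadditive if $f(S)+f(S')\ge f(S\cup S')$. Contract $\boldsymbol{\alpha}\in[0,1]^A$; agent $i$'s utility $\alpha_if(S)-c(S\cap T_i)$; $S\in\mathsf{NE}(\boldsymbol{\alpha})$ (pure Nash equilibrium) if no agent can gain by changing her own subset of actions. Principal's utility $(1-\sum_i\alpha_i)f(S)$. A contract is equal-pay if all its nonzero entries are equal. The price of equality of an instance is $\dfrac{\max_{\boldsymbol{\alpha},\,S\in\mathsf{NE}(\boldsymbol{\alpha})}(1-\sum_i\alpha_i)f(S)}{\max_{\boldsymbol{\alpha}\text{ equal-pay},\,S\in\mathsf{NE}(\boldsymbol{\alpha})}(1-\sum_i\alpha_i)f(S)}$. *)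

theory Defs
  imports Complex_Main
begin

text \<open>An instance: n agents indexed 0..<n; a finite set T of actions (of type nat);
  owner j is the agent owning action j (so T_i = {j \<in> T. owner j = i}, pairwise disjoint);
  costs c; reward f on subsets of T.\<close>

definition actions_of :: "nat set \<Rightarrow> (nat \<Rightarrow> nat) \<Rightarrow> nat \<Rightarrow> nat set" where
  "actions_of T owner i = {j \<in> T. owner j = i}"

definition cost :: "(nat \<Rightarrow> real) \<Rightarrow> nat set \<Rightarrow> real" where
  "cost c S = (\<Sum>j\<in>S. c j)"

definition valid_instance ::
  "nat \<Rightarrow> nat set \<Rightarrow> (nat \<Rightarrow> nat) \<Rightarrow> (nat \<Rightarrow> real) \<Rightarrow> (nat set \<Rightarrow> real) \<Rightarrow> bool" where
  "valid_instance n T owner c f \<longleftrightarrow>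
     finite T \<and> (\<forall>j\<in>T. owner j < n) \<and> (\<forall>j\<in>T. c j \<ge> 0) \<and>
     f {} = 0 \<and> (\<forall>S. S \<subseteq> T \<longrightarrow> 0 \<le> f S \<and> f S \<le> 1) \<and>
     (\<forall>S S'. S \<subseteq> S' \<and> S' \<subseteq> T \<longrightarrow> f S \<le> f S')"

definition subadditive_on :: "nat set \<Rightarrow> (nat set \<Rightarrow> real) \<Rightarrow> bool" where
  "subadditive_on T f \<longleftrightarrow> (\<forall>S S'. S \<subseteq> T \<and> S' \<subseteq> T \<longrightarrow> f (S \<union> S') \<le> f S + f S')"

definition is_contract :: "nat \<Rightarrow> (nat \<Rightarrow> real) \<Rightarrow> bool" where
  "is_contract n \<alpha> \<longleftrightarrow> (\<forall>i<n. 0 \<le> \<alpha> i \<and> \<alpha> i \<le> 1) \<and> (\<forall>i\<ge>n. \<alpha> i = 0)"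

definition equal_pay :: "nat \<Rightarrow> (nat \<Rightarrow> real) \<Rightarrow> bool" where
  "equal_pay n \<alpha> \<longleftrightarrow> (\<forall>i<n. \<forall>k<n. \<alpha> i \<noteq> 0 \<and> \<alpha> k \<noteq> 0 \<longrightarrow> \<alpha> i = \<alpha> k)"

definition agent_utility ::
  "nat set \<Rightarrow> (nat \<Rightarrow> nat) \<Rightarrow> (nat \<Rightarrow> real) \<Rightarrow> (nat set \<Rightarrow> real) \<Rightarrow> (nat \<Rightarrow> real) \<Rightarrow> nat \<Rightarrow> nat set \<Rightarrow> real" where
  "agent_utility T owner c f \<alpha> i S = \<alpha> i * f S - cost c (S \<inter> actions_of T owner i)"

definition is_NE ::
  "nat \<Rightarrow> nat set \<Rightarrow> (nat \<Rightarrow> nat) \<Rightarrow> (nat \<Rightarrow> real) \<Rightarrow> (nat set \<Rightarrow> real) \<Rightarrow> (nat \<Rightarrow> real) \<Rightarrow> nat set \<Rightarrow> bool" where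
  "is_NE n T owner c f \<alpha> S \<longleftrightarrow> S \<subseteq> T \<and>
     (\<forall>i<n. \<forall>S'. S' \<subseteq> actions_of T owner i \<longrightarrow>
        agent_utility T owner c f \<alpha> i ((S - actions_of T owner i) \<union> S')
          \<le> agent_utility T owner c f \<alpha> i S)"

definition principal_utility :: "nat \<Rightarrow> (nat set \<Rightarrow> real) \<Rightarrow> (nat \<Rightarrow> real) \<Rightarrow> nat set \<Rightarrow> real" where
  "principal_utility n f \<alpha> S = (1 - (\<Sum>i<n. \<alpha> i)) * f S"

text \<open>Optimal principal utility over all contracts / over equal-pay contracts
  (the maxima of the paper, written as suprema; both sets are nonempty and bounded by 1).\<close>
definition opt_all ::
  "nat \<Rightarrow> nat set \<Rightarrow> (nat \<Rightarrow> nat) \<Rightarrow> (nat \<Rightarrow> real) \<Rightarrow> (nat set \<Rightarrow> real) \<Rightarrow> real" where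
  "opt_all n T owner c f = Sup {principal_utility n f \<alpha> S | \<alpha> S.
      is_contract n \<alpha> \<and> is_NE n T owner c f \<alpha> S}"

definition opt_equal ::
  "nat \<Rightarrow> nat set \<Rightarrow> (nat \<Rightarrow> nat) \<Rightarrow> (nat \<Rightarrow> real) \<Rightarrow> (nat set \<Rightarrow> real) \<Rightarrow> real" where
  "opt_equal n T owner c f = Sup {principal_utility n f \<alpha> S | \<alpha> S.
      is_contract n \<alpha> \<and> equal_pay n \<alpha> \<and> is_NE n T owner c f \<alpha> S}"

end

theory Submission imports Defs begin

definition FF :: "real \<Rightarrow> real \<Rightarrow> nat \<Rightarrow> nat \<Rightarrow> bool \<Rightarrow> real" where
  "FF U l m x b = (if x = 0 then (if b then U else 0)
     else if x < m then U + l * (real x - 1)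
     else (if b then 2 * U + l * (real m - 2) else U + l * (real m - 1)))"

lemma FF_mono:
  assumes "0 \<le> l" "l \<le> U" "2 \<le> m" "x \<le> x'" "x' \<le> m" "b \<longrightarrow> b'"
  shows "FF U l m x b \<le> FF U l m x' b'"
  proof -
  have "l * real x \<le> l * real x'" using assms by (simp add: mult_left_mono)
  moreover have "l * real x' \<le> l * real m" using assms by (simp add: mult_left_mono)
  moreover have "l \<le> l * real x'" if "0 < x'"
  proof -
    have "1 \<le> real x'" using that by simp
    then have "l * 1 \<le> l * real x'" using assms(1) by (rule mult_left_mono)
    then show ?thesis by simp
  qed
  moreover have "2 * l \<le> l * real m"
  proof -
    have "2 \<le> real m" using assms by simp
    then have "l * 2 \<le> l * real m" using assms(1) by (rule mult_left_mono)
    then show ?thesis by simp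
  qed
  ultimately show ?thesis using assms unfolding FF_def by (auto simp: algebra_simps)
qed

lemma FF_sub:
  assumes "0 \<le> l" "l \<le> U" "2 \<le> m" "x1 \<le> x" "x2 \<le> x" "x \<le> x1 + x2" "x \<le> m"
  shows "FF U l m x (b1 \<or> b2) \<le> FF U l m x1 b1 + FF U l m x2 b2"
proof -
  have ge: "U + l * (real y - 1) \<le> FF U l m y b" if "1 \<le> y" "y \<le> m" for y b
    using that assms unfolding FF_def by (auto simp: algebra_simps)
  have TF: "FF U l m y True \<le> FF U l m y False + U" for y
    using assms unfolding FF_def by (auto simp: algebra_simps)
  show ?thesis
  proof (cases "x = 0")
    case True
    then show ?thesis using assms unfolding FF_def by auto
  next
    case False
    show ?thesis
    proof (cases "x1 = 0")
      case True
      then have "x2 = x" using assms by auto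
      then show ?thesis using True TF[of x] assms unfolding FF_def by (cases b1; cases b2) auto
    next
      case x1: False
      show ?thesis
      proof (cases "x2 = 0")
        case True
        then have "x1 = x" using assms by auto
        then show ?thesis using True TF[of x] assms unfolding FF_def by (cases b1; cases b2) auto
      next
        case x2: False
        have "U + l * (real x1 - 1) \<le> FF U l m x1 b1" using ge x1 assms by auto
        moreover have "U + l * (real x2 - 1) \<le> FF U l m x2 b2" using ge x2 assms by auto
        moreover have "real x \<le> real x1 + real x2" using assms by simp
        moreover have "FF U l m x (b1 \<or> b2) \<le> 2 * U + l * (real x - 2)"
          using assms False unfolding FF_def by (auto simp: algebra_simps)
        moreover have "l * real x \<le> l * (real x1 + real x2)"
          using assms(1) \<open>real x \<le> real x1 + real x2\<close> by (simp add: mult_left_mono)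
        ultimately show ?thesis using assms by (simp add: algebra_simps)
      qed
    qed
  qed
qed


definition ff :: "real \<Rightarrow> real \<Rightarrow> nat \<Rightarrow> nat set \<Rightarrow> real" where
  "ff U l m S = FF U l m (card (S \<inter> {..<m})) (m \<in> S)"

definition cc :: "real \<Rightarrow> real \<Rightarrow> nat \<Rightarrow> nat \<Rightarrow> real" where
  "cc ce cC m j = (if j = m then ce else cC)"

lemma card_cheap_le: "card (S \<inter> {..<m}) \<le> m"
  by (metis card_lessThan card_mono finite_lessThan inf_le2)

lemma actions_of_id: "i < n \<Longrightarrow> actions_of {..<n} (\<lambda>j. j) i = {i}"
  unfolding actions_of_def by auto

lemma FF_nonneg: "0 \<le> l \<Longrightarrow> l \<le> U \<Longrightarrow> 2 \<le> m \<Longrightarrow> x \<le> m \<Longrightarrow> 0 \<le> FF U l m x b"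
  using FF_mono[of l U m 0 x False b] by (simp add: FF_def)

lemma FF_le_top: "0 \<le> l \<Longrightarrow> l \<le> U \<Longrightarrow> 2 \<le> m \<Longrightarrow> x \<le> m \<Longrightarrow> FF U l m x b \<le> 2 * U + l * (real m - 2)"
  using FF_mono[of l U m x m b True] by (simp add: FF_def)

lemma valid_inst:
  assumes "0 \<le> l" "l \<le> U" "2 \<le> m" "2 * U + l * (real m - 2) \<le> 1" "0 \<le> ce" "0 \<le> cC"
  shows "valid_instance (Suc m) {..<Suc m} (\<lambda>j. j) (cc ce cC m) (ff U l m)"
  unfolding valid_instance_def
proof (intro conjI allI impI ballI)
  show "ff U l m {} = 0" by (simp add: ff_def FF_def)
  fix S assume "S \<subseteq> {..<Suc m}"
  show "0 \<le> ff U l m S" unfolding ff_def using FF_nonneg assms card_cheap_le by blast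
  show "ff U l m S \<le> 1" unfolding ff_def using FF_le_top[OF assms(1-3) card_cheap_le] assms(4)
    by (meson order_trans)
next
  fix S S' assume a: "S \<subseteq> S' \<and> S' \<subseteq> {..<Suc m}"
  have "card (S \<inter> {..<m}) \<le> card (S' \<inter> {..<m})"
    using a by (intro card_mono) auto
  then show "ff U l m S \<le> ff U l m S'" unfolding ff_def
    using FF_mono assms card_cheap_le a by blast
qed (use assms in \<open>auto simp: cc_def\<close>)

lemma subadd_inst:
  assumes "0 \<le> l" "l \<le> U" "2 \<le> m"
  shows "subadditive_on {..<Suc m} (ff U l m)"
  unfolding subadditive_on_def
proof (intro allI impI)
  fix S S' :: "nat set" assume "S \<subseteq> {..<Suc m} \<and> S' \<subseteq> {..<Suc m}"
  have eq: "(S \<union> S') \<inter> {..<m} = (S \<inter> {..<m}) \<union> (S' \<inter> {..<m})" by auto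
  have f1: "finite (S \<inter> {..<m})" "finite (S' \<inter> {..<m})" by auto
  have "card ((S \<union> S') \<inter> {..<m}) \<le> card (S \<inter> {..<m}) + card (S' \<inter> {..<m})"
    unfolding eq by (rule card_Un_le)
  moreover have "card (S \<inter> {..<m}) \<le> card ((S \<union> S') \<inter> {..<m})" by (intro card_mono) auto
  moreover have "card (S' \<inter> {..<m}) \<le> card ((S \<union> S') \<inter> {..<m})" by (intro card_mono) auto
  ultimately have "FF U l m (card ((S \<union> S') \<inter> {..<m})) (m \<in> S \<or> m \<in> S')
     \<le> FF U l m (card (S \<inter> {..<m})) (m \<in> S) + FF U l m (card (S' \<inter> {..<m})) (m \<in> S')"
    using FF_sub[OF assms] card_cheap_le by blast
  then show "ff U l m (S \<union> S') \<le> ff U l m S + ff U l m S'" unfolding ff_def by simp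
qed


lemma contract_sum_nonneg: "is_contract n \<alpha> \<Longrightarrow> 0 \<le> (\<Sum>i<n. \<alpha> i)"
  unfolding is_contract_def by (intro sum_nonneg) auto

lemma pu_le_f:
  assumes "valid_instance n T owner c f" "is_contract n \<alpha>" "is_NE n T owner c f \<alpha> S"
  shows "principal_utility n f \<alpha> S \<le> f S" "0 \<le> f S" "f S \<le> 1"
proof -
  have "S \<subseteq> T" using assms(3) unfolding is_NE_def by auto
  then show f0: "0 \<le> f S" and "f S \<le> 1" using assms(1) unfolding valid_instance_def by auto
  have "0 \<le> (\<Sum>i<n. \<alpha> i)" using contract_sum_nonneg assms(2) by blast
  then show "principal_utility n f \<alpha> S \<le> f S" unfolding principal_utility_def
    using f0 by (simp add: algebra_simps mult_nonneg_nonneg)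
qed

lemma bdd_opt:
  assumes "valid_instance n T owner c f"
  shows "bdd_above {principal_utility n f \<alpha> S | \<alpha> S. is_contract n \<alpha> \<and> is_NE n T owner c f \<alpha> S}"
  unfolding bdd_above_def using pu_le_f[OF assms] by (intro exI[of _ 1]) (fastforce intro: order_trans)

lemma ff_full: "2 \<le> m \<Longrightarrow> ff U l m {..<Suc m} = 2 * U + l * (real m - 2)"
proof -
  have "{..<Suc m} \<inter> {..<m} = {..<m}" by auto
  then show "2 \<le> m \<Longrightarrow> ?thesis" unfolding ff_def FF_def by simp
qed

lemma ff_minus_top: "2 \<le> m \<Longrightarrow> ff U l m ({..<Suc m} - {m}) = U + l * (real m - 1)"
proof -
  have "({..<Suc m} - {m}) \<inter> {..<m} = {..<m}" by auto
  then show "2 \<le> m \<Longrightarrow> ?thesis" unfolding ff_def FF_def by simp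
qed

lemma ff_minus_cheap: "2 \<le> m \<Longrightarrow> i < m \<Longrightarrow> ff U l m ({..<Suc m} - {i}) = U + l * (real m - 2)"
proof -
  assume a: "2 \<le> m" "i < m"
  have "({..<Suc m} - {i}) \<inter> {..<m} = {..<m} - {i}" by auto
  moreover have "card ({..<m} - {i}) = m - 1" using a by simp
  moreover have "real (m - 1) - 1 = real m - 2" using a by (simp add: of_nat_diff)
  ultimately show ?thesis unfolding ff_def FF_def using a by simp
qed

definition alpha0 :: "nat \<Rightarrow> nat \<Rightarrow> real" where
  "alpha0 m i = (if i = m then 1/2 else if i < m then 1 / (4 * real m) else 0)"

lemma witness:
  assumes "0 < l" "l < U" "2 \<le> m" "cC = U / (4 * real m)" "ce = (U - l) / 2"
  shows "is_contract (Suc m) (alpha0 m)"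
    "is_NE (Suc m) {..<Suc m} (\<lambda>j. j) (cc ce cC m) (ff U l m) (alpha0 m) {..<Suc m}"
    "principal_utility (Suc m) (ff U l m) (alpha0 m) {..<Suc m} = (2 * U + l * (real m - 2)) / 4"
proof -
  show "is_contract (Suc m) (alpha0 m)" unfolding is_contract_def alpha0_def using assms by auto
  show "is_NE (Suc m) {..<Suc m} (\<lambda>j. j) (cc ce cC m) (ff U l m) (alpha0 m) {..<Suc m}"
    unfolding is_NE_def
  proof (intro conjI allI impI)
    fix i S' assume i: "i < Suc m" and S': "S' \<subseteq> actions_of {..<Suc m} (\<lambda>j. j) i"
    have A: "actions_of {..<Suc m} (\<lambda>j. j) i = {i}" using actions_of_id i by blast
    have iS: "{..<Suc m} \<inter> {i} = {i}" using i by auto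
    have "S' = {} \<or> S' = {i}" using S' A by auto
    then show "agent_utility {..<Suc m} (\<lambda>j. j) (cc ce cC m) (ff U l m) (alpha0 m) i
            ({..<Suc m} - actions_of {..<Suc m} (\<lambda>j. j) i \<union> S')
        \<le> agent_utility {..<Suc m} (\<lambda>j. j) (cc ce cC m) (ff U l m) (alpha0 m) i {..<Suc m}"
    proof
      assume "S' = {i}"
      then have "{..<Suc m} - actions_of {..<Suc m} (\<lambda>j. j) i \<union> S' = {..<Suc m}" using A i by auto
      then show ?thesis by simp
    next
      assume S0: "S' = {}"
      have e1: "({..<Suc m} - {i}) \<inter> {i} = {}" by auto
      show ?thesis
      proof (cases "i = m")
        case True
        show ?thesis unfolding agent_utility_def A S0 using True assms
          by (simp add: e1 iS ff_full ff_minus_top cost_def cc_def alpha0_def algebra_simps)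
      next
        case False
        then have im: "i < m" using i by auto
        have "1 / (4 * real m) * (U + l * (real m - 2)) = 1 / (4 * real m) * (2 * U + l * (real m - 2)) - U / (4 * real m)"
          using assms by (simp add: field_simps)
        then show ?thesis unfolding agent_utility_def A S0 using False im assms
          by (simp add: e1 iS ff_full ff_minus_cheap cost_def cc_def alpha0_def)
      qed
    qed
  qed simp
  have "(\<Sum>i<Suc m. alpha0 m i) = (\<Sum>i<m. alpha0 m i) + 1/2" by (simp add: alpha0_def)
  also have "(\<Sum>i<m. alpha0 m i) = (\<Sum>i<m. 1 / (4 * real m))" by (intro sum.cong) (auto simp: alpha0_def)
  also have "\<dots> = 1/4" using assms by simp
  finally have "(\<Sum>i<Suc m. alpha0 m i) = 3/4" by simp
  then show "principal_utility (Suc m) (ff U l m) (alpha0 m) {..<Suc m} = (2 * U + l * (real m - 2)) / 4"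
    unfolding principal_utility_def using assms by (simp add: ff_full)
qed

lemma opt_all_ge:
  assumes "0 < l" "l < U" "2 \<le> m" "cC = U / (4 * real m)" "ce = (U - l) / 2"
    "2 * U + l * (real m - 2) \<le> 1"
  shows "(2 * U + l * (real m - 2)) / 4 \<le> opt_all (Suc m) {..<Suc m} (\<lambda>j. j) (cc ce cC m) (ff U l m)"
proof -
  have v: "valid_instance (Suc m) {..<Suc m} (\<lambda>j. j) (cc ce cC m) (ff U l m)"
    using assms by (intro valid_inst) auto
  have mem: "principal_utility (Suc m) (ff U l m) (alpha0 m) {..<Suc m} \<in> {principal_utility (Suc m) (ff U l m) \<alpha> S | \<alpha> S.
      is_contract (Suc m) \<alpha> \<and> is_NE (Suc m) {..<Suc m} (\<lambda>j. j) (cc ce cC m) (ff U l m) \<alpha> S}"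
    using witness(1,2)[OF assms(1-5)] by blast
  show ?thesis unfolding opt_all_def
    using cSup_upper[OF mem bdd_opt[OF v]] witness(3)[OF assms(1-5)] by simp
qed


lemma eq_bound:
  assumes m2: "2 \<le> m" and l0: "0 < l" and lU: "l < U" and cC0: "0 < cC" and ce: "ce = (U - l) / 2"
    and con: "is_contract (Suc m) \<alpha>" and eqp: "equal_pay (Suc m) \<alpha>"
    and ne: "is_NE (Suc m) {..<Suc m} (\<lambda>j. j) (cc ce cC m) (ff U l m) \<alpha> S"
  shows "principal_utility (Suc m) (ff U l m) \<alpha> S \<le> U + l^2 / cC"
proof -
  have Ssub: "S \<subseteq> {..<Suc m}" using ne unfolding is_NE_def by auto
  have anon: "0 \<le> \<alpha> i" for i using con unfolding is_contract_def by (cases "i < Suc m") auto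
  have dev: "cc ce cC m i \<le> \<alpha> i * (ff U l m S - ff U l m (S - {i}))" if iS: "i \<in> S" for i
  proof -
    have i: "i < Suc m" using iS Ssub by auto
    have A: "actions_of {..<Suc m} (\<lambda>j. j) i = {i}" using actions_of_id i by blast
    have "agent_utility {..<Suc m} (\<lambda>j. j) (cc ce cC m) (ff U l m) \<alpha> i
            ((S - actions_of {..<Suc m} (\<lambda>j. j) i) \<union> {})
        \<le> agent_utility {..<Suc m} (\<lambda>j. j) (cc ce cC m) (ff U l m) \<alpha> i S"
      using ne i unfolding is_NE_def by blast
    moreover have "(S - {i}) \<inter> {i} = {}" "S \<inter> {i} = {i}" using iS by auto
    ultimately show ?thesis unfolding agent_utility_def A cost_def by (simp add: algebra_simps)
  qed
  have sum0: "0 \<le> (\<Sum>i<Suc m. \<alpha> i)" by (intro sum_nonneg) (simp add: anon)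
  have f0: "0 \<le> ff U l m S" unfolding ff_def using FF_nonneg card_cheap_le m2 l0 lU by simp
  have puf: "principal_utility (Suc m) (ff U l m) \<alpha> S \<le> ff U l m S"
    unfolding principal_utility_def using mult_nonneg_nonneg[OF sum0 f0]
    by (simp only: left_diff_distrib mult_1_left)
  have pu: "principal_utility (Suc m) (ff U l m) \<alpha> S = (1 - (\<Sum>i<Suc m. \<alpha> i)) * ff U l m S"
    unfolding principal_utility_def by simp
  have bnd0: "0 \<le> U + l^2 / cC" using lU l0 cC0 by simp
  have neg: "principal_utility (Suc m) (ff U l m) \<alpha> S \<le> 0" if "1 \<le> (\<Sum>i<Suc m. \<alpha> i)"
    unfolding pu using that f0 by (simp add: mult_nonpos_nonneg)
  define x where "x = card (S \<inter> {..<m})"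
  have xle: "x \<le> m" unfolding x_def by (rule card_cheap_le)
  have fS: "ff U l m S = FF U l m x (m \<in> S)" unfolding ff_def x_def by simp
  show ?thesis
  proof (cases "ff U l m S \<le> U")
    case True
    have "0 \<le> l^2 / cC" using cC0 by simp
    then show ?thesis using puf True by linarith
  next
    case big: False
    have x2: "2 \<le> x"
    proof (rule ccontr)
      assume "\<not> 2 \<le> x"
      then have "x = 0 \<or> x = 1" by auto
      then have "ff U l m S \<le> U" unfolding fS FF_def using m2 l0 lU by auto
      then show False using big by simp
    qed
    show ?thesis
    proof (cases "m \<in> S")
      case mS: True
      show ?thesis
      proof (cases "x < m")
        case True
        have "(S - {m}) \<inter> {..<m} = S \<inter> {..<m}" by auto
        then have "ff U l m (S - {m}) = FF U l m x False" unfolding ff_def x_def by simp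
        also have "\<dots> = ff U l m S" unfolding fS FF_def using True x2 mS by simp
        finally have "ce \<le> 0" using dev[OF mS] by (simp add: cc_def)
        then show ?thesis using ce lU by simp
      next
        case False
        then have xm: "x = m" using xle by simp
        have cs: "card (S \<inter> {..<m}) = card {..<m}" using xm unfolding x_def by simp
        have "S \<inter> {..<m} = {..<m}" using card_subset_eq[OF finite_lessThan _ cs] by blast
        moreover have "0 \<in> {..<m}" using m2 by simp
        ultimately have S0: "0 \<in> S" by blast
        have "(S - {m}) \<inter> {..<m} = S \<inter> {..<m}" by auto
        then have "ff U l m (S - {m}) = FF U l m x False" unfolding ff_def x_def by simp
        then have "ff U l m (S - {m}) = FF U l m m False" using xm by simp
        then have fSm': "ff U l m (S - {m}) = U + l * (real m - 1)" using m2 by (simp add: FF_def)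
        have fSm: "ff U l m S = 2 * U + l * (real m - 2)" using fS xm mS m2 by (simp add: FF_def)
        have dd: "(2 * U + l * (real m - 2)) - (U + l * (real m - 1)) = U - l" by (simp add: algebra_simps)
        have "ce \<le> \<alpha> m * (U - l)" using dev[OF mS] unfolding fSm fSm' dd by (simp add: cc_def)
        then have am: "1/2 \<le> \<alpha> m"
        proof -
          assume h: "ce \<le> \<alpha> m * (U - l)"
          show ?thesis
          proof (rule ccontr)
            assume "\<not> 1/2 \<le> \<alpha> m"
            then have "\<alpha> m * (U - l) < 1/2 * (U - l)" using lU by (intro mult_strict_right_mono) auto
            then show False using h ce by simp
          qed
        qed
        have "cc ce cC m 0 = cC" using m2 by (simp add: cc_def)
        then have h0: "cC \<le> \<alpha> 0 * (ff U l m S - ff U l m (S - {0}))" using dev[OF S0] by simp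
        have "\<alpha> 0 \<noteq> 0"
        proof
          assume "\<alpha> 0 = 0"
          then have "cC \<le> 0" using h0 by simp
          then show False using cC0 by simp
        qed
        moreover have "\<alpha> m \<noteq> 0" using am by auto
        ultimately have "\<alpha> 0 = \<alpha> m" using eqp unfolding equal_pay_def by auto
        have "(\<Sum>i\<in>{0, m}. \<alpha> i) \<le> (\<Sum>i<Suc m. \<alpha> i)"
          by (intro sum_mono2) (auto simp: anon)
        moreover have "(\<Sum>i\<in>{0, m}. \<alpha> i) = \<alpha> 0 + \<alpha> m" using m2 by simp
        ultimately have "1 \<le> (\<Sum>i<Suc m. \<alpha> i)" using am \<open>\<alpha> 0 = \<alpha> m\<close> by simp
        then show ?thesis using neg bnd0 by linarith
      qed
    next
      case mS: False
      have Sm: "S \<subseteq> {..<m}" using Ssub mS by (auto simp: less_Suc_eq)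
      then have xS: "x = card S" unfolding x_def by (simp add: Int_absorb2)
      have finS: "finite S" using Sm finite_subset by blast
      have fSv: "ff U l m S = U + l * (real x - 1)"
        unfolding fS FF_def using x2 mS xle by auto
      have ai: "cC / l \<le> \<alpha> i" if iS: "i \<in> S" for i
      proof -
        have "(S - {i}) \<inter> {..<m} = S - {i}" using Sm by auto
        moreover have "card (S - {i}) = x - 1" using xS iS finS by simp
        ultimately have "ff U l m (S - {i}) = FF U l m (x - 1) False" unfolding ff_def using mS by simp
        also have "\<dots> = U + l * (real x - 2)" proof -
          have "x - 1 \<noteq> 0" "x - 1 < m" "real (x - 1) = real x - 1" using x2 xle by auto
          then show ?thesis unfolding FF_def by simp
        qed
        finally have fSi: "ff U l m (S - {i}) = U + l * (real x - 2)" .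
        have dd: "(U + l * (real x - 1)) - (U + l * (real x - 2)) = l" by (simp add: algebra_simps)
        have "i \<noteq> m" using iS Sm by auto
        then have "cc ce cC m i = cC" by (simp add: cc_def)
        then have "cC \<le> \<alpha> i * l" using dev[OF iS] unfolding fSv fSi dd by simp
        then show ?thesis using l0 by (simp add: pos_divide_le_eq)
      qed
      have "(\<Sum>i\<in>S. cC / l) \<le> (\<Sum>i\<in>S. \<alpha> i)" by (intro sum_mono) (rule ai)
      also have "\<dots> \<le> (\<Sum>i<Suc m. \<alpha> i)" using Ssub by (intro sum_mono2) (auto simp: anon)
      finally have sx: "real x * (cC / l) \<le> (\<Sum>i<Suc m. \<alpha> i)" using xS by simp
      show ?thesis
      proof (cases "1 \<le> (\<Sum>i<Suc m. \<alpha> i)")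
        case True
        then show ?thesis using neg bnd0 by linarith
      next
        case False
        then have "real x * (cC / l) < 1" using sx by simp
        then have "real x * cC < l" using l0 by (simp add: field_simps)
        then have "l * real x * cC < l * l" using l0 by (simp add: mult.assoc)
        then have "l * real x < l^2 / cC" using cC0 by (simp add: field_simps power2_eq_square)
        then have "ff U l m S \<le> U + l^2 / cC" using fSv l0 by (simp add: algebra_simps)
        then show ?thesis using puf by linarith
      qed
    qed
  qed
qed


lemma opt_equal_le:
  assumes m2: "2 \<le> m" and l0: "0 < l" and lU: "l < U" and cC0: "0 < cC" and ce: "ce = (U - l) / 2"
  shows "opt_equal (Suc m) {..<Suc m} (\<lambda>j. j) (cc ce cC m) (ff U l m) \<le> U + l^2 / cC"
  unfolding opt_equal_def
proof (rule cSup_least)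
  let ?z = "\<lambda>i::nat. 0::real"
  have c0: "0 \<le> cc ce cC m j" for j using assms by (simp add: cc_def)
  have "is_contract (Suc m) ?z" "equal_pay (Suc m) ?z" unfolding is_contract_def equal_pay_def by auto
  moreover have "is_NE (Suc m) {..<Suc m} (\<lambda>j. j) (cc ce cC m) (ff U l m) ?z {}"
    unfolding is_NE_def agent_utility_def cost_def
    using c0 by (auto intro!: sum_nonneg)
  ultimately show "{principal_utility (Suc m) (ff U l m) \<alpha> S |\<alpha> S.
     is_contract (Suc m) \<alpha> \<and> equal_pay (Suc m) \<alpha> \<and> is_NE (Suc m) {..<Suc m} (\<lambda>j. j) (cc ce cC m) (ff U l m) \<alpha> S} \<noteq> {}"
    by blast
next
  fix v assume "v \<in> {principal_utility (Suc m) (ff U l m) \<alpha> S |\<alpha> S.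
     is_contract (Suc m) \<alpha> \<and> equal_pay (Suc m) \<alpha> \<and> is_NE (Suc m) {..<Suc m} (\<lambda>j. j) (cc ce cC m) (ff U l m) \<alpha> S}"
  then show "v \<le> U + l^2 / cC" using eq_bound[OF assms] by blast
qed

theorem proposition5p9:
  shows "\<exists>C>0. \<exists>N. \<forall>n\<ge>N. \<exists>T owner c f.
           valid_instance n T owner c f \<and> subadditive_on T f \<and>
           opt_all n T owner c f > 0 \<and>
           C * sqrt (real n) * opt_equal n T owner c f \<le> opt_all n T owner c f"
proof (intro exI[of _ "1/40"] conjI exI[of _ "16::nat"] allI impI)
  fix n :: nat assume n16: "16 \<le> n"
  define m where "m = n - 1"
  have nm: "n = Suc m" using n16 unfolding m_def by simp
  have m15: "15 \<le> m" using n16 unfolding m_def by simp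
  define s where "s = sqrt (real n)"
  have "sqrt ((4::real)^2) \<le> sqrt (real n)" using n16 by (subst real_sqrt_le_iff) simp
  then have s4: "4 \<le> s" unfolding s_def by simp
  have ss: "s * s = real n" unfolding s_def by simp
  have "s * 1 \<le> s * s" using s4 by (intro mult_left_mono) auto
  then have sn: "s \<le> real n" using ss by simp
  have rn: "real n = real m + 1" using nm by simp
  define U where "U = 1 / s"
  define l where "l = 1 / (4 * real n)"
  define cC where "cC = U / (4 * real m)"
  define ce where "ce = (U - l) / 2"
  have l0: "0 < l" unfolding l_def using n16 by simp
  have lU: "l < U" unfolding l_def U_def using s4 sn by (simp add: field_simps)
  have cC0: "0 < cC" unfolding cC_def U_def using s4 m15 by simp
  have m2: "2 \<le> m" using m15 by simp
  have lm: "l * (real m - 2) \<le> 1/4" unfolding l_def using rn n16 by (simp add: field_simps)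
  have lm2: "1/8 \<le> l * (real m - 2)" unfolding l_def using rn m15 by (simp add: field_simps)
  have U2: "2 * U \<le> 1/2" unfolding U_def using s4 by (simp add: field_simps)
  have V1: "2 * U + l * (real m - 2) \<le> 1" using lm U2 by simp
  have U0: "0 < U" unfolding U_def using s4 by simp
  have all_ge: "1/32 \<le> opt_all n {..<n} (\<lambda>j. j) (cc ce cC m) (ff U l m)"
    using opt_all_ge[OF l0 lU m2 cC_def ce_def V1] lm2 U0 unfolding nm by simp
  have eq_le: "opt_equal n {..<n} (\<lambda>j. j) (cc ce cC m) (ff U l m) \<le> U + l^2 / cC"
    using opt_equal_le[OF m2 l0 lU cC0 ce_def] unfolding nm by simp
  have "l^2 / cC = real m * s / (4 * real n ^ 2)"
    unfolding l_def cC_def U_def using s4 m15 n16 by (simp add: field_simps power2_eq_square)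
  also have "\<dots> \<le> real n * s / (4 * real n ^ 2)"
    using rn s4 by (intro divide_right_mono mult_right_mono) auto
  also have "\<dots> = 1 / (4 * s)" using ss s4 n16 by (simp add: field_simps power2_eq_square)
  finally have lc: "l^2 / cC \<le> 1 / (4 * s)" .
  have "U + 1 / (4 * s) = 5 / (4 * s)" unfolding U_def using s4 by (simp add: field_simps)
  then have "U + l^2 / cC \<le> 5 / (4 * s)" using lc by linarith
  then have eq_le2: "opt_equal n {..<n} (\<lambda>j. j) (cc ce cC m) (ff U l m) \<le> 5 / (4 * s)"
    using eq_le by linarith
  have "1/40 * s * opt_equal n {..<n} (\<lambda>j. j) (cc ce cC m) (ff U l m) \<le> 1/40 * s * (5 / (4 * s))"
    using eq_le2 s4 by (intro mult_left_mono) auto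
  also have "\<dots> = 1/32" using s4 by (simp add: field_simps)
  finally have fin: "1/40 * sqrt (real n) * opt_equal n {..<n} (\<lambda>j. j) (cc ce cC m) (ff U l m) \<le> opt_all n {..<n} (\<lambda>j. j) (cc ce cC m) (ff U l m)"
    using all_ge unfolding s_def by linarith
  have "valid_instance n {..<n} (\<lambda>j. j) (cc ce cC m) (ff U l m)"
    unfolding nm using valid_inst[of l U m ce cC] l0 lU m2 V1 U0 cC0 unfolding ce_def by simp
  moreover have "subadditive_on {..<n} (ff U l m)" unfolding nm using subadd_inst l0 lU m2 by simp
  moreover have "opt_all n {..<n} (\<lambda>j. j) (cc ce cC m) (ff U l m) > 0" using all_ge by linarith
  ultimately show "\<exists>T owner c f. valid_instance n T owner c f \<and> subadditive_on T f \<and>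
           opt_all n T owner c f > 0 \<and>
           1/40 * sqrt (real n) * opt_equal n T owner c f \<le> opt_all n T owner c f"
    using fin by blast
qed simp

end
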